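(* Let $p$ be a prime with $p\equiv 1\pmod 6$. Then there exist an integer $k$ with $2\le k\le p-1$ and an orthogonal trade $T$ in $B_p$ of index $(1,k)$ such that $|T|$ is not divisible by $p$. More precisely, for any integer $k$ with $2\le k\le (p+1)/2$ and $k^2-k+1\equiv 0\pmod p$ (such $k$ exists), there is an orthogonal trade of index $(1,k)$ in $B_p$ of size $3k(k-1)$.
   Context: All arithmetic is modulo $p$. A Latin square of order $p$ is viewed as a set of (row, column, symbol) triples in $\mathbb{Z}_p^3$. For $1\le k\le p-1$, $B_p(k)$ is the Latin square with symbol $ki+j$ in cell $(i,j)$, $i,j\in\mathbb{Z}_p$; $B_p=B_p(1)$. A Latin trade in a Latin square $L$ is a subset $T\subseteq L$ for which there is a partial Latin square $T'$ (a disjoint mate) such that $T$ and $T'$ occupy the same set of cells, $T\cap T'=\emptyset$, and each row (respectively column) of $T$ contains the same set of symbols as the corresponding row (column) of $T'$. Two Latin squares of order $p$ are orthogonal if superimposing them yields each of the $p^2$ ordered pairs exactly once. An orthogonal trade of index $(\ell,k)$ is a Latin trade $T\subseteq B_p(\ell)$ having a disjoint mate $T'$ such that $(B_p(\ell)\setminus T)\cup T'$ is orthogonal to $B_p(k)$. $|T|$ is the number of triples in $T$. *)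

theory Defs
  imports "HOL-Computational_Algebra.Primes"
begin

text \<open>Z_p is represented by the naturals 0..p-1; a (partial) Latin square of order p
is a set of (row, column, symbol) triples.\<close>

definition Bk :: "nat \<Rightarrow> nat \<Rightarrow> (nat \<times> nat \<times> nat) set" where
  "Bk p k = {(i, j, (k * i + j) mod p) | i j. i < p \<and> j < p}"

definition partial_latin :: "nat \<Rightarrow> (nat \<times> nat \<times> nat) set \<Rightarrow> bool" where
  "partial_latin p L \<longleftrightarrow>
     (\<forall>(i, j, s) \<in> L. i < p \<and> j < p \<and> s < p) \<and>
     (\<forall>i j s s'. (i, j, s) \<in> L \<longrightarrow> (i, j, s') \<in> L \<longrightarrow> s = s') \<and>
     (\<forall>i j j' s. (i, j, s) \<in> L \<longrightarrow> (i, j', s) \<in> L \<longrightarrow> j = j') \<and>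
     (\<forall>i i' j s. (i, j, s) \<in> L \<longrightarrow> (i', j, s) \<in> L \<longrightarrow> i = i')"

definition latin_square :: "nat \<Rightarrow> (nat \<times> nat \<times> nat) set \<Rightarrow> bool" where
  "latin_square p L \<longleftrightarrow> partial_latin p L \<and>
     (\<forall>i j. i < p \<longrightarrow> j < p \<longrightarrow> (\<exists>s. (i, j, s) \<in> L))"

definition cells :: "(nat \<times> nat \<times> nat) set \<Rightarrow> (nat \<times> nat) set" where
  "cells T = {(i, j). \<exists>s. (i, j, s) \<in> T}"

definition row_syms :: "(nat \<times> nat \<times> nat) set \<Rightarrow> nat \<Rightarrow> nat set" where
  "row_syms T i = {s. \<exists>j. (i, j, s) \<in> T}"

definition col_syms :: "(nat \<times> nat \<times> nat) set \<Rightarrow> nat \<Rightarrow> nat set" where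
  "col_syms T j = {s. \<exists>i. (i, j, s) \<in> T}"

definition disjoint_mate :: "nat \<Rightarrow> (nat \<times> nat \<times> nat) set \<Rightarrow> (nat \<times> nat \<times> nat) set \<Rightarrow> bool" where
  "disjoint_mate p T T' \<longleftrightarrow> partial_latin p T' \<and> cells T = cells T' \<and> T \<inter> T' = {} \<and>
     (\<forall>i. row_syms T i = row_syms T' i) \<and> (\<forall>j. col_syms T j = col_syms T' j)"

definition latin_trade :: "nat \<Rightarrow> (nat \<times> nat \<times> nat) set \<Rightarrow> (nat \<times> nat \<times> nat) set \<Rightarrow> bool" where
  "latin_trade p L T \<longleftrightarrow> T \<subseteq> L \<and> (\<exists>T'. disjoint_mate p T T')"

definition orthogonal :: "nat \<Rightarrow> (nat \<times> nat \<times> nat) set \<Rightarrow> (nat \<times> nat \<times> nat) set \<Rightarrow> bool" where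
  "orthogonal p L1 L2 \<longleftrightarrow> latin_square p L1 \<and> latin_square p L2 \<and>
     (\<forall>a b. a < p \<longrightarrow> b < p \<longrightarrow> (\<exists>!c. \<exists>i j. c = (i, j) \<and> (i, j, a) \<in> L1 \<and> (i, j, b) \<in> L2))"

definition orthogonal_trade :: "nat \<Rightarrow> nat \<Rightarrow> nat \<Rightarrow> (nat \<times> nat \<times> nat) set \<Rightarrow> bool" where
  "orthogonal_trade p l k T \<longleftrightarrow> T \<subseteq> Bk p l \<and>
     (\<exists>T'. disjoint_mate p T T' \<and> orthogonal p ((Bk p l - T) \<union> T') (Bk p k))"

end

theory Submission
  imports Defs "HOL-Number_Theory.Residue_Primitive_Roots"
begin


locale tr =
  fixes p k :: nat
  assumes prime: "prime p" and p6: "p mod 6 = 1" and k2: "2 \<le> k"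
    and kle: "k \<le> (p+1) div 2" and kdvd: "p dvd (k^2 - k + 1)"
begin

abbreviation "q \<equiv> int p"
abbreviation "K \<equiv> int k"
abbreviation "n \<equiv> int k - 1"
definition "h = (int p - 1) div 2"
definition "D = K^2 - K + 1"

lemma p_odd: "p mod 2 = 1" using p6 by presburger

lemma q_eq: "q = 2*h + 1"
  unfolding h_def using p_odd by presburger

lemma p7: "p \<ge> 7"
proof -
  have "p \<ge> 2" using prime prime_ge_2_nat by blast
  then show ?thesis using p6 by presburger
qed

lemma n_bounds: "1 \<le> n" "n \<le> h" "h \<ge> 3"
proof -
  show "1 \<le> n" using k2 by simp
  have "2 * k \<le> p + 1" using kle by linarith
  then show "n \<le> h" using q_eq by linarith
  show "h \<ge> 3" using p7 q_eq by linarith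
qed

lemma qD: "q dvd D"
proof -
  have "k \<le> k^2" by (simp add: power2_eq_square)
  then have "int (k^2 - k + 1) = K^2 - K + 1" by (simp add: of_nat_diff)
  then show ?thesis using kdvd unfolding D_def by (metis int_dvd_int_iff)
qed

definition cen :: "int \<Rightarrow> int" where "cen a = (a + h) mod q - h"

lemma q_pos: "q > 0" using p7 by simp

lemma cen_bounds: "-h \<le> cen a" "cen a \<le> h"
  unfolding cen_def using q_eq pos_mod_bound[of q "a+h"] pos_mod_sign[of q "a+h"] q_pos by linarith+

lemma cen_mod: "cen a mod q = a mod q"
  unfolding cen_def by (simp add: mod_diff_left_eq)

lemma cen_id: "-h \<le> a \<Longrightarrow> a \<le> h \<Longrightarrow> cen a = a"
  unfolding cen_def using q_eq by (simp add: mod_pos_pos_trivial)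

lemma cen_eq_iff: "cen a = cen b \<longleftrightarrow> a mod q = b mod q"
proof
  assume "cen a = cen b" then show "a mod q = b mod q" by (metis cen_mod)
next
  assume "a mod q = b mod q"
  then have "(a + h) mod q = (b + h) mod q" by (metis mod_add_cong)
  then show "cen a = cen b" unfolding cen_def by simp
qed

lemma small_cong: "-h \<le> a \<Longrightarrow> a \<le> h \<Longrightarrow> -h \<le> b \<Longrightarrow> b \<le> h \<Longrightarrow> a mod q = b mod q \<Longrightarrow> a = b"
  by (metis cen_eq_iff cen_id)

definition inH :: "int \<times> int \<Rightarrow> bool" where
  "inH P = (\<bar>fst P\<bar> \<le> n \<and> \<bar>snd P\<bar> \<le> n \<and> \<bar>fst P - snd P\<bar> \<le> n \<and> P \<noteq> (0,0))"

fun sig :: "int \<times> int \<Rightarrow> int \<times> int" where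
  "sig (x,y) = (if x \<ge> 0 \<and> y > x then (x+1,y) else if y \<ge> 1 \<and> x \<ge> y then (x, y-1)
     else if x \<ge> 1 \<and> y \<le> 0 then (x-1,y-1) else if x \<le> 0 \<and> y < x then (x-1,y)
     else if y \<le> -1 \<and> x \<le> y then (x, y+1) else (x+1,y+1))"

definition SS :: "int \<times> int \<Rightarrow> int" where "SS P = K * fst P - snd P"

definition tau :: "int \<Rightarrow> int \<Rightarrow> int" where
"tau X Y = (if Y = 0 then (if 1 \<le> X \<and> X \<le> n then X - K else if -n \<le> X \<and> X \<le> -1 then X + K else X)
 else if 1 \<le> Y \<and> Y \<le> n then (if Y - n \<le> X \<and> X \<le> -1 then X + K else if 0 \<le> X \<and> X \<le> Y - 1 then X + 1
    else if Y \<le> X \<and> X \<le> n then X - n else X)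
 else if -n \<le> Y \<and> Y \<le> -1 then (if -n \<le> X \<and> X \<le> Y then X + n else if Y + 1 \<le> X \<and> X \<le> 0 then X - 1
    else if 1 \<le> X \<and> X \<le> Y + n then X - K else X)
 else X)"

lemma tau_range: "\<bar>X\<bar> \<le> h \<Longrightarrow> \<bar>tau X Y\<bar> \<le> h"
  using n_bounds unfolding tau_def by auto

lemma tau_inj: "\<bar>X1\<bar> \<le> h \<Longrightarrow> \<bar>X2\<bar> \<le> h \<Longrightarrow> tau X1 Y = tau X2 Y \<Longrightarrow> X1 = X2"
  using n_bounds unfolding tau_def by (auto split: if_splits)

lemma tau_notH: "\<not> inH (X,Y) \<Longrightarrow> tau X Y = X"
  unfolding tau_def inH_def by auto

lemma modD: "(a + c * D) mod q = a mod q"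
proof -
  obtain m where "D = q * m" using qD by blast
  then show ?thesis by (metis mod_mult_self1 mult.assoc mult.commute)
qed

lemma tau_cong: "inH (X,Y) \<Longrightarrow> SS (sig (X,Y)) mod q = (K * tau X Y - Y) mod q"
proof -
  assume H: "inH (X,Y)"
  have H': "\<bar>X\<bar> \<le> n" "\<bar>Y\<bar> \<le> n" "\<bar>X - Y\<bar> \<le> n" "(X,Y) \<noteq> (0,0)" using H unfolding inH_def by auto
  consider (A) "X \<ge> 0 \<and> Y > X" | (B) "Y \<ge> 1 \<and> X \<ge> Y" | (C) "X \<ge> 1 \<and> Y \<le> 0"
    | (D) "X \<le> 0 \<and> Y < X" | (E) "Y \<le> -1 \<and> X \<le> Y" | (F) "X \<le> -1 \<and> Y \<ge> 0"
    using H'(4) by force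
  then show ?thesis
  proof cases
    case A
    then have e: "sig (X,Y) = (X+1,Y)" "tau X Y = X + 1" using H' unfolding tau_def by auto
    show ?thesis unfolding e by (simp add: SS_def algebra_simps)
  next
    case B
    then have e: "sig (X,Y) = (X,Y-1)" "tau X Y = X - n" using H' unfolding tau_def by auto
    have "K * tau X Y - Y = SS (sig (X,Y)) + (-1) * D" unfolding e by (simp add: SS_def D_def algebra_simps power2_eq_square)
    then show ?thesis using modD by metis
  next
    case C
    then have e: "sig (X,Y) = (X-1,Y-1)" "tau X Y = X - K" using H' unfolding tau_def by auto
    have "K * tau X Y - Y = SS (sig (X,Y)) + (-1) * D" unfolding e by (simp add: SS_def D_def algebra_simps power2_eq_square)
    then show ?thesis using modD by metis
  next
    case D
    then have e: "sig (X,Y) = (X-1,Y)" "tau X Y = X - 1" using H' unfolding tau_def by auto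
    show ?thesis unfolding e by (simp add: SS_def algebra_simps)
  next
    case E
    then have e: "sig (X,Y) = (X,Y+1)" "tau X Y = X + n" using H' unfolding tau_def by auto
    have "K * tau X Y - Y = SS (sig (X,Y)) + 1 * D" unfolding e by (simp add: SS_def D_def algebra_simps power2_eq_square)
    then show ?thesis using modD by metis
  next
    case F
    then have e: "sig (X,Y) = (X+1,Y+1)" "tau X Y = X + K" using H' unfolding tau_def by auto
    have "K * tau X Y - Y = SS (sig (X,Y)) + 1 * D" unfolding e by (simp add: SS_def D_def algebra_simps power2_eq_square)
    then show ?thesis using modD by metis
  qed
qed

definition Psi :: "int \<times> int \<Rightarrow> int" where "Psi P = (if inH P then SS (sig P) else SS P) mod q"
definition Phi :: "int \<times> int \<Rightarrow> int" where "Phi P = Psi (cen (fst P), cen (snd P))"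

lemma Psi_tau: "Psi (X,Y) = (K * tau X Y - Y) mod q"
  using tau_cong tau_notH unfolding Psi_def SS_def by auto

lemma Phi_range: "0 \<le> Phi P" "Phi P < q"
  unfolding Phi_def Psi_def using q_pos by auto

lemma Phi_cong: "fst P mod q = fst P' mod q \<Longrightarrow> snd P mod q = snd P' mod q \<Longrightarrow> Phi P = Phi P'"
  unfolding Phi_def by (metis cen_eq_iff)

lemma qprime: "prime q" using prime by simp

lemma K_pos: "0 < K" "K < q" using k2 n_bounds q_eq by auto

lemma cancelK: "(K*a) mod q = (K*b) mod q \<Longrightarrow> a mod q = b mod q"
proof -
  assume "(K*a) mod q = (K*b) mod q"
  then have "q dvd K * (a - b)" by (simp add: mod_eq_dvd_iff right_diff_distrib)
  moreover have "\<not> q dvd K" using K_pos zdvd_imp_le by fastforce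
  ultimately have "q dvd (a - b)" using qprime prime_dvd_mult_iff by blast
  then show ?thesis by (simp add: mod_eq_dvd_iff)
qed

lemma RL: "snd P1 mod q = snd P2 mod q \<Longrightarrow> Phi P1 = Phi P2 \<Longrightarrow> fst P1 mod q = fst P2 mod q"
proof -
  assume a1: "snd P1 mod q = snd P2 mod q" and a2: "Phi P1 = Phi P2"
  define Y where "Y = cen (snd P1)"
  have Y2: "cen (snd P2) = Y" using a1 unfolding Y_def by (simp add: cen_eq_iff)
  define X1 where "X1 = cen (fst P1)"
  define X2 where "X2 = cen (fst P2)"
  have "(K * tau X1 Y - Y) mod q = (K * tau X2 Y - Y) mod q"
    using a2 Y2 unfolding Phi_def X1_def X2_def Y_def by (simp add: Psi_tau)
  then have "(K * tau X1 Y) mod q = (K * tau X2 Y) mod q" by (simp add: mod_eq_dvd_iff)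
  then have "tau X1 Y mod q = tau X2 Y mod q" by (rule cancelK)
  note m = this
  have b: "\<bar>X1\<bar> \<le> h" "\<bar>X2\<bar> \<le> h" unfolding X1_def X2_def abs_le_iff using cen_bounds[of "fst P1"] cen_bounds[of "fst P2"] by auto
  have "-h \<le> tau X1 Y" "tau X1 Y \<le> h" "-h \<le> tau X2 Y" "tau X2 Y \<le> h"
    using tau_range[OF b(1), of Y] tau_range[OF b(2), of Y] by (auto simp: abs_le_iff)
  then have "tau X1 Y = tau X2 Y" using small_cong m by blast
  then have "X1 = X2" using tau_inj b by blast
  then show ?thesis unfolding X1_def X2_def by (simp add: cen_eq_iff)
qed

lemma inH_rho: "inH (x,y) \<Longrightarrow> inH (x - y, x)"
  unfolding inH_def by auto

lemma sig_rho: "inH (x,y) \<Longrightarrow> sig (x - y, x) = (fst (sig (x,y)) - snd (sig (x,y)), fst (sig (x,y)))"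
proof -
  assume H: "inH (x,y)"
  then have "(x,y) \<noteq> (0,0)" unfolding inH_def by auto
  then consider (A) "x \<ge> 0 \<and> y > x" | (B) "y \<ge> 1 \<and> x \<ge> y" | (C) "x \<ge> 1 \<and> y \<le> 0"
    | (D) "x \<le> 0 \<and> y < x" | (E) "y \<le> -1 \<and> x \<le> y" | (F) "x \<le> -1 \<and> y \<ge> 0"
    by force
  then show ?thesis by cases simp_all
qed

lemma inH_rho_inv: "inH (u,x) \<Longrightarrow> inH (x, x - u)"
  unfolding inH_def by auto

declare sig.simps[simp del]

lemma SS_rho: "SS (a - b, a) = K * SS (a,b) + (-a) * D"
  unfolding SS_def D_def by (simp add: algebra_simps power2_eq_square)

lemma SS_cong: "a mod q = a' mod q \<Longrightarrow> b mod q = b' mod q \<Longrightarrow> SS (a,b) mod q = SS (a',b') mod q"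
proof -
  assume a: "a mod q = a' mod q" and b: "b mod q = b' mod q"
  have "(K*a) mod q = (K*a') mod q" using mod_mult_cong[OF refl a, of K] .
  then show ?thesis unfolding SS_def using mod_diff_cong[OF _ b] by simp
qed

lemma SYM: "Phi (x - y, x) = (K * Phi (x,y)) mod q"
proof -
  define X where "X = cen x"
  define Y where "Y = cen y"
  have mX: "X mod q = x mod q" and mY: "Y mod q = y mod q" unfolding X_def Y_def by (simp_all add: cen_mod)
  have mXY: "(X - Y) mod q = (x - y) mod q" using mod_diff_cong[OF mX mY] .
  have PhiP: "Phi (x,y) = Psi (X,Y)" unfolding Phi_def X_def Y_def by simp
  show ?thesis
  proof (cases "inH (X,Y)")
    case True
    have "inH (X - Y, X)" by (rule inH_rho[OF True])
    then have "\<bar>X - Y\<bar> \<le> n" unfolding inH_def by simp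
    have "cen (x - y) = cen (X - Y)" using mXY by (simp add: cen_eq_iff)
    also have "\<dots> = X - Y" by (rule cen_id) (use \<open>\<bar>X - Y\<bar> \<le> n\<close> n_bounds in auto)
    finally have c1: "cen (x - y) = X - Y" .
    have "Phi (x - y, x) = Psi (X - Y, X)" unfolding Phi_def using c1 X_def by simp
    also have "\<dots> = SS (sig (X - Y, X)) mod q" using \<open>inH (X - Y, X)\<close> unfolding Psi_def by simp
    also have "\<dots> = SS (fst (sig (X,Y)) - snd (sig (X,Y)), fst (sig (X,Y))) mod q"
      using sig_rho[OF True] by simp
    also have "\<dots> = (K * SS (sig (X,Y)) + (- fst (sig (X,Y))) * D) mod q"
      using SS_rho[of "fst (sig (X,Y))" "snd (sig (X,Y))"] by simp
    also have "\<dots> = (K * SS (sig (X,Y))) mod q" by (rule modD)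
    also have "\<dots> = (K * (SS (sig (X,Y)) mod q)) mod q" by (simp add: mod_mult_right_eq)
    also have "\<dots> = (K * Phi (x,y)) mod q" using True PhiP unfolding Psi_def by simp
    finally show ?thesis .
  next
    case False
    define U where "U = cen (x - y)"
    have mU: "U mod q = (x - y) mod q" unfolding U_def by (simp add: cen_mod)
    have nH: "\<not> inH (U, X)"
    proof
      assume H: "inH (U, X)"
      then have "\<bar>X - U\<bar> \<le> n" unfolding inH_def by (simp add: abs_minus_commute)
      have "(X - U) mod q = (x - (x - y)) mod q" using mod_diff_cong[OF mX mU] .
      then have m: "(X - U) mod q = Y mod q" using mY by simp
      have b1: "-h \<le> X - U" "X - U \<le> h" using \<open>\<bar>X - U\<bar> \<le> n\<close> n_bounds by auto
      have b2: "-h \<le> Y" "Y \<le> h" unfolding Y_def by (rule cen_bounds)+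
      have "X - U = Y" using small_cong[OF b1 b2 m] .
      moreover have "inH (X, X - U)" using H by (rule inH_rho_inv)
      ultimately show False using False by simp
    qed
    have "Phi (x - y, x) = SS (U, X) mod q" unfolding Phi_def Psi_def using nH U_def X_def by simp
    also have "\<dots> = SS (x - y, x) mod q" using SS_cong[OF mU mX] .
    also have "\<dots> = (K * SS (x,y) + (-x) * D) mod q" using SS_rho[of x y] by simp
    also have "\<dots> = (K * SS (x,y)) mod q" by (rule modD)
    also have "\<dots> = (K * (SS (x,y) mod q)) mod q" by (simp add: mod_mult_right_eq)
    also have "\<dots> = (K * (SS (X,Y) mod q)) mod q" using SS_cong[OF mX mY] by simp
    also have "\<dots> = (K * Phi (x,y)) mod q" using False PhiP unfolding Psi_def by simp
    finally show ?thesis .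
  qed
qed

lemma cancelPhi: "(K * Phi P1) mod q = (K * Phi P2) mod q \<Longrightarrow> Phi P1 = Phi P2"
proof -
  assume "(K * Phi P1) mod q = (K * Phi P2) mod q"
  then have "Phi P1 mod q = Phi P2 mod q" by (rule cancelK)
  then show ?thesis using Phi_range by (simp add: mod_pos_pos_trivial)
qed

lemma KL: "(fst P1 - snd P1) mod q = (fst P2 - snd P2) mod q \<Longrightarrow> Phi P1 = Phi P2
   \<Longrightarrow> fst P1 mod q = fst P2 mod q \<and> snd P1 mod q = snd P2 mod q"
proof -
  assume a1: "(fst P1 - snd P1) mod q = (fst P2 - snd P2) mod q" and a2: "Phi P1 = Phi P2"
  obtain x1 y1 x2 y2 where P: "P1 = (x1,y1)" "P2 = (x2,y2)" by fastforce
  have "Phi (y1 - (y1 - x1), y1) = (K * Phi (y1, y1 - x1)) mod q" by (rule SYM)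
  moreover have "Phi (y2 - (y2 - x2), y2) = (K * Phi (y2, y2 - x2)) mod q" by (rule SYM)
  ultimately have "(K * Phi (y1, y1 - x1)) mod q = (K * Phi (y2, y2 - x2)) mod q" using a2 P by simp
  then have "Phi (y1, y1 - x1) = Phi (y2, y2 - x2)" by (rule cancelPhi)
  moreover have "(y1 - x1) mod q = (y2 - x2) mod q"
  proof -
    have "(x1 - y1) mod q = (x2 - y2) mod q" using a1 P by simp
    then have "(- (x1 - y1)) mod q = (- (x2 - y2)) mod q" by (metis mod_minus_cong)
    then show ?thesis by simp
  qed
  ultimately have my: "y1 mod q = y2 mod q" using RL[of "(y1, y1 - x1)" "(y2, y2 - x2)"] by simp
  have "(y1 - (y1 - x1)) mod q = (y2 - (y2 - x2)) mod q"
    using my \<open>(y1 - x1) mod q = (y2 - x2) mod q\<close> by (metis mod_diff_cong)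
  then show ?thesis using my P by simp
qed

lemma CL: "fst P1 mod q = fst P2 mod q \<Longrightarrow> Phi P1 = Phi P2 \<Longrightarrow> snd P1 mod q = snd P2 mod q"
proof -
  assume a1: "fst P1 mod q = fst P2 mod q" and a2: "Phi P1 = Phi P2"
  obtain x1 y1 x2 y2 where P: "P1 = (x1,y1)" "P2 = (x2,y2)" by fastforce
  have "Phi (y1 - (y1 - x1), y1) = (K * Phi (y1, y1 - x1)) mod q" by (rule SYM)
  moreover have "Phi (y2 - (y2 - x2), y2) = (K * Phi (y2, y2 - x2)) mod q" by (rule SYM)
  ultimately have "(K * Phi (y1, y1 - x1)) mod q = (K * Phi (y2, y2 - x2)) mod q" using a2 P by simp
  then have "Phi (y1, y1 - x1) = Phi (y2, y2 - x2)" by (rule cancelPhi)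
  moreover have "(y1 - (y1 - x1)) mod q = (y2 - (y2 - x2)) mod q" using a1 P by simp
  ultimately show ?thesis using KL[of "(y1, y1 - x1)" "(y2, y2 - x2)"] P by simp
qed

lemma unK: "((1 - K) * a) mod q = ((1 - K) * b) mod q \<Longrightarrow> a mod q = b mod q"
proof -
  assume "((1 - K) * a) mod q = ((1 - K) * b) mod q"
  then have "(K * ((1 - K) * a)) mod q = (K * ((1 - K) * b)) mod q" using mod_mult_cong[OF refl, of _ _ _ K] by blast
  moreover have "K * ((1 - K) * a) = a + (-a) * D" "K * ((1 - K) * b) = b + (-b) * D"
    unfolding D_def by (simp_all add: algebra_simps power2_eq_square)
  ultimately show ?thesis using modD by metis
qed

lemma nat_mod_eq: "i < p \<Longrightarrow> j < p \<Longrightarrow> int i mod q = int j mod q \<Longrightarrow> i = j"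
  by (simp add: mod_pos_pos_trivial)

definition f :: "nat \<Rightarrow> nat \<Rightarrow> nat" where "f i j = nat (Phi ((1 - K) * int j, - int i))"

lemma f_lt: "f i j < p"
  unfolding f_def using Phi_range by (simp add: nat_less_iff)

lemma f_Phi: "f i j = f i' j' \<Longrightarrow> Phi ((1 - K) * int j, - int i) = Phi ((1 - K) * int j', - int i')"
  unfolding f_def using Phi_range by (metis eq_nat_nat_iff)

lemma f_row: "j1 < p \<Longrightarrow> j2 < p \<Longrightarrow> f i j1 = f i j2 \<Longrightarrow> j1 = j2"
proof -
  assume j: "j1 < p" "j2 < p" and e: "f i j1 = f i j2"
  have "((1 - K) * int j1) mod q = ((1 - K) * int j2) mod q"
    using RL[of "((1 - K) * int j1, - int i)" "((1 - K) * int j2, - int i)"] f_Phi[OF e] by simp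
  then have "int j1 mod q = int j2 mod q" by (rule unK)
  then show ?thesis using j nat_mod_eq by blast
qed

lemma f_col: "i1 < p \<Longrightarrow> i2 < p \<Longrightarrow> f i1 j = f i2 j \<Longrightarrow> i1 = i2"
proof -
  assume i: "i1 < p" "i2 < p" and e: "f i1 j = f i2 j"
  have "(- int i1) mod q = (- int i2) mod q"
    using CL[of "((1 - K) * int j, - int i1)" "((1 - K) * int j, - int i2)"] f_Phi[OF e] by simp
  then have "(- (- int i1)) mod q = (- (- int i2)) mod q" by (metis mod_minus_cong)
  then show ?thesis using i nat_mod_eq by simp
qed

lemma f_kl: "i1 < p \<Longrightarrow> i2 < p \<Longrightarrow> j1 < p \<Longrightarrow> j2 < p \<Longrightarrow> (k*i1 + j1) mod p = (k*i2 + j2) mod p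
   \<Longrightarrow> f i1 j1 = f i2 j2 \<Longrightarrow> i1 = i2 \<and> j1 = j2"
proof -
  assume b: "i1 < p" "i2 < p" "j1 < p" "j2 < p" and m: "(k*i1 + j1) mod p = (k*i2 + j2) mod p"
    and e: "f i1 j1 = f i2 j2"
  have "int ((k*i1 + j1) mod p) = int ((k*i2 + j2) mod p)" using m by simp
  then have m': "(K * int i1 + int j1) mod q = (K * int i2 + int j2) mod q" by (simp add: zmod_int)
  have "((1 - K) * (K * int i1 + int j1)) mod q = ((1 - K) * (K * int i2 + int j2)) mod q"
    using mod_mult_cong[OF refl m', of "1 - K"] .
  moreover have "(1 - K) * (K * int i1 + int j1) = ((1 - K) * int j1 - - int i1) + (- int i1) * D"
    "(1 - K) * (K * int i2 + int j2) = ((1 - K) * int j2 - - int i2) + (- int i2) * D"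
    unfolding D_def by (simp_all add: algebra_simps power2_eq_square)
  ultimately have "((1 - K) * int j1 - - int i1) mod q = ((1 - K) * int j2 - - int i2) mod q"
    using modD by metis
  then have "((1 - K) * int j1) mod q = ((1 - K) * int j2) mod q \<and> (- int i1) mod q = (- int i2) mod q"
    using KL[of "((1 - K) * int j1, - int i1)" "((1 - K) * int j2, - int i2)"] f_Phi[OF e] by simp
  then have "int j1 mod q = int j2 mod q" "(- (- int i1)) mod q = (- (- int i2)) mod q"
    using unK mod_minus_cong by blast+
  then show ?thesis using b nat_mod_eq by simp
qed

lemma sig_step: "inH (x,y) \<Longrightarrow> \<exists>a b. sig (x,y) = (x + a, y + b) \<and> a \<in> {-1,0,1} \<and> b \<in> {-1,0,1} \<and> (a,b) \<noteq> (0,0)"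
proof -
  assume H: "inH (x,y)"
  then have "(x,y) \<noteq> (0,0)" unfolding inH_def by auto
  then consider (A) "x \<ge> 0 \<and> y > x" | (B) "y \<ge> 1 \<and> x \<ge> y" | (C) "x \<ge> 1 \<and> y \<le> 0"
    | (D) "x \<le> 0 \<and> y < x" | (E) "y \<le> -1 \<and> x \<le> y" | (F) "x \<le> -1 \<and> y \<ge> 0"
    by force
  then show ?thesis
  proof cases
    case A then have "sig (x,y) = (x + 1, y + 0)" by (simp add: sig.simps)
    then show ?thesis by (intro exI[of _ "1::int"] exI[of _ "0::int"]) simp
  next
    case B then have "sig (x,y) = (x + 0, y + -1)" by (simp add: sig.simps)
    then show ?thesis by (intro exI[of _ "0::int"] exI[of _ "-1::int"]) simp
  next
    case C then have "sig (x,y) = (x + -1, y + -1)" by (simp add: sig.simps)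
    then show ?thesis by (intro exI[of _ "-1::int"] exI[of _ "-1::int"]) simp
  next
    case D then have "sig (x,y) = (x + -1, y + 0)" by (simp add: sig.simps)
    then show ?thesis by (intro exI[of _ "-1::int"] exI[of _ "0::int"]) simp
  next
    case E then have "sig (x,y) = (x + 0, y + 1)" by (simp add: sig.simps)
    then show ?thesis by (intro exI[of _ "0::int"] exI[of _ "1::int"]) simp
  next
    case F then have "sig (x,y) = (x + 1, y + 1)" by (simp add: sig.simps)
    then show ?thesis by (intro exI[of _ "1::int"] exI[of _ "1::int"]) simp
  qed
qed


end


context tr begin
lemma sig_neq: "inH P \<Longrightarrow> SS (sig P) mod q \<noteq> SS P mod q"
proof
  assume H: "inH P" and e: "SS (sig P) mod q = SS P mod q"
  obtain x y where P: "P = (x,y)" by fastforce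
  obtain a b where ab: "sig (x,y) = (x + a, y + b)" "a \<in> {-1,0,1}" "b \<in> {-1,0,1}" "(a,b) \<noteq> (0,0)"
    using sig_step H P by blast
  have dd: "SS (sig P) - SS P = K * a - b" unfolding P ab(1) SS_def by (simp add: algebra_simps)
  then have d: "q dvd (K * a - b)" using e by (simp add: mod_eq_dvd_iff)
  have "a = -1 \<or> a = 0 \<or> a = 1" "b = -1 \<or> b = 0 \<or> b = 1" using ab(2,3) by auto
  then have A: "K * a - b \<noteq> 0" "\<bar>K * a - b\<bar> \<le> K + 1" using ab(4) k2 by (auto simp: abs_if)
  have "\<bar>q\<bar> \<le> \<bar>K * a - b\<bar>" using dvd_imp_le_int[OF A(1) d] .
  then show False using A(2) q_pos n_bounds q_eq by linarith
qed

definition g :: "nat \<Rightarrow> nat \<Rightarrow> int \<times> int" where "g i j = (cen ((1 - K) * int j), cen (- int i))"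

lemma SS_g: "SS (g i j) mod q = int ((i + j) mod p)"
proof -
  have "SS (g i j) mod q = SS ((1 - K) * int j, - int i) mod q"
    unfolding g_def by (rule SS_cong) (simp_all add: cen_mod)
  also have "SS ((1 - K) * int j, - int i) = (int i + int j) + (- int j) * D"
    unfolding SS_def D_def by (simp add: algebra_simps power2_eq_square)
  also have "\<dots> mod q = (int i + int j) mod q" by (rule modD)
  finally show ?thesis by (simp add: zmod_int)
qed

lemma f_g: "f i j = nat (Psi (g i j))" unfolding f_def Phi_def g_def by simp

lemma f_notin: "\<not> inH (g i j) \<Longrightarrow> f i j = (i + j) mod p"
  unfolding f_g Psi_def using SS_g by simp

lemma f_in: "inH (g i j) \<Longrightarrow> f i j \<noteq> (i + j) mod p"
proof
  assume H: "inH (g i j)" and e: "f i j = (i + j) mod p"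
  have "nat (SS (sig (g i j)) mod q) = nat (SS (g i j) mod q)" using e H SS_g unfolding f_g Psi_def by simp
  moreover have "0 \<le> SS (sig (g i j)) mod q" "0 \<le> SS (g i j) mod q" using q_pos by simp_all
  ultimately have "SS (sig (g i j)) mod q = SS (g i j) mod q" using eq_nat_nat_iff by blast
  then show False using sig_neq[OF H] by simp
qed

definition "C = {(i,j). i < p \<and> j < p \<and> f i j \<noteq> (i + j) mod p}"

lemma C_alt: "C = {(i,j). i < p \<and> j < p \<and> inH (g i j)}"
  unfolding C_def using f_in f_notin by auto

lemma g_inj: "i1 < p \<Longrightarrow> i2 < p \<Longrightarrow> j1 < p \<Longrightarrow> j2 < p \<Longrightarrow> g i1 j1 = g i2 j2 \<Longrightarrow> i1 = i2 \<and> j1 = j2"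
proof -
  assume b: "i1 < p" "i2 < p" "j1 < p" "j2 < p" and e: "g i1 j1 = g i2 j2"
  then have "((1 - K) * int j1) mod q = ((1 - K) * int j2) mod q" "(- int i1) mod q = (- int i2) mod q"
    unfolding g_def by (simp_all add: cen_eq_iff)
  then have "int j1 mod q = int j2 mod q" "(- (- int i1)) mod q = (- (- int i2)) mod q"
    using unK mod_minus_cong by blast+
  then show ?thesis using b nat_mod_eq by simp
qed

lemma g_bij: "bij_betw (\<lambda>(i,j). g i j) C {P. inH P}"
proof (rule bij_betw_imageI)
  show "inj_on (\<lambda>(i,j). g i j) C"
    unfolding inj_on_def C_alt using g_inj by auto
  show "(\<lambda>(i,j). g i j) ` C = {P. inH P}"
  proof
    show "(\<lambda>(i,j). g i j) ` C \<subseteq> {P. inH P}" unfolding C_alt by auto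
    show "{P. inH P} \<subseteq> (\<lambda>(i,j). g i j) ` C"
    proof
      fix P assume "P \<in> {P. inH P}"
      then have H: "inH P" by simp
      obtain x y where P: "P = (x,y)" by fastforce
      have bx: "-h \<le> x" "x \<le> h" "-h \<le> y" "y \<le> h" using H n_bounds unfolding P inH_def by auto
      define i where "i = nat ((- y) mod q)"
      define j where "j = nat ((K * x) mod q)"
      have i: "int i = (- y) mod q" "i < p" unfolding i_def using q_pos by (simp_all add: nat_less_iff)
      have j: "int j = (K * x) mod q" "j < p" unfolding j_def using q_pos by (simp_all add: nat_less_iff)
      have "((1 - K) * int j) mod q = ((1 - K) * (K * x)) mod q"
        unfolding j(1) by (simp add: mod_mult_right_eq)
      also have "(1 - K) * (K * x) = x + (- x) * D" unfolding D_def by (simp add: algebra_simps power2_eq_square)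
      also have "\<dots> mod q = x mod q" by (rule modD)
      finally have "((1 - K) * int j) mod q = x mod q" .
      then have "cen ((1 - K) * int j) = cen x" by (simp add: cen_eq_iff)
      then have g1: "cen ((1 - K) * int j) = x" using cen_id[OF bx(1,2)] by simp
      have "(- int i) mod q = y mod q" unfolding i(1) mod_minus_eq by simp
      then have "cen (- int i) = cen y" by (simp add: cen_eq_iff)
      then have g2: "cen (- int i) = y" using cen_id[OF bx(3,4)] by simp
      have "g i j = P" unfolding g_def P g1 g2 by simp
      moreover have "(i,j) \<in> C" unfolding C_alt using i j H \<open>g i j = P\<close> by simp
      ultimately show "P \<in> (\<lambda>(i,j). g i j) ` C" by force
    qed
  qed
qed


end


context tr begin

definition "box = {1..n} \<times> {0..n}"
definition "R1 = {(x,y). 1 \<le> x \<and> x \<le> n \<and> x - n \<le> y \<and> y \<le> x}"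
definition "R2 = {(x,y). 0 \<le> y \<and> y \<le> n \<and> y - n \<le> x \<and> x \<le> y - 1}"
definition "R3 = {(x,y). -n \<le> x \<and> x \<le> 0 \<and> -n \<le> y \<and> y \<le> -1}"

lemma H_split: "{P. inH P} = R1 \<union> R2 \<union> R3"
proof
  show "{P. inH P} \<subseteq> R1 \<union> R2 \<union> R3"
  proof
    fix P assume a: "P \<in> {P. inH P}"
    obtain x y where P: "P = (x,y)" by fastforce
    have H: "\<bar>x\<bar> \<le> n" "\<bar>y\<bar> \<le> n" "\<bar>x - y\<bar> \<le> n" "(x,y) \<noteq> (0,0)"
      using a unfolding P inH_def by auto
    show "P \<in> R1 \<union> R2 \<union> R3"
    proof (cases "1 \<le> x \<and> y \<le> x")
      case True then show ?thesis using H unfolding P R1_def by auto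
    next
      case f1: False
      show ?thesis
      proof (cases "0 \<le> y \<and> x < y")
        case True then show ?thesis using H unfolding P R2_def by auto
      next
        case False then show ?thesis using f1 H unfolding P R3_def by auto
      qed
    qed
  qed
  show "R1 \<union> R2 \<union> R3 \<subseteq> {P. inH P}"
    unfolding R1_def R2_def R3_def inH_def by auto
qed

lemma box_card: "card box = k * (k - 1)"
proof -
  have "card box = card {1..n} * card {0..n}" unfolding box_def by (simp add: card_cartesian_product)
  also have "\<dots> = nat n * nat (n + 1)" by simp
  also have "\<dots> = (k - 1) * k" using k2 by (simp add: nat_diff_distrib)
  finally show ?thesis by simp
qed

lemma fin_box: "finite box" unfolding box_def by simp

lemma R1_card: "card R1 = card box"
proof -
  have "bij_betw (\<lambda>(a,t). (a, a - n + t)) box R1"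
    by (rule bij_betw_byWitness[where f' = "\<lambda>(x,y). (x, y - x + n)"]) (auto simp: box_def R1_def)
  then show ?thesis by (simp add: bij_betw_same_card)
qed

lemma R2_card: "card R2 = card box"
proof -
  have "bij_betw (\<lambda>(a,t). (n - a - t, n - t)) box R2"
    by (rule bij_betw_byWitness[where f' = "\<lambda>(x,y). (y - x, n - y)"]) (auto simp: box_def R2_def)
  then show ?thesis by (simp add: bij_betw_same_card)
qed

lemma R3_card: "card R3 = card box"
proof -
  have "bij_betw (\<lambda>(a,t). (t - n, -a)) box R3"
    by (rule bij_betw_byWitness[where f' = "\<lambda>(x,y). (-y, x + n)"]) (auto simp: box_def R3_def)
  then show ?thesis by (simp add: bij_betw_same_card)
qed

lemma fin_R: "finite R1" "finite R2" "finite R3"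
proof -
  have "R1 \<subseteq> {-n..n} \<times> {-n..n}" "R2 \<subseteq> {-n..n} \<times> {-n..n}" "R3 \<subseteq> {-n..n} \<times> {-n..n}"
    unfolding R1_def R2_def R3_def by auto
  then show "finite R1" "finite R2" "finite R3" by (auto intro: finite_subset)
qed

lemma H_card: "card {P. inH P} = 3 * k * (k - 1)"
proof -
  have d1: "R1 \<inter> R2 = {}" "(R1 \<union> R2) \<inter> R3 = {}" unfolding R1_def R2_def R3_def by auto
  have "card (R1 \<union> R2 \<union> R3) = card (R1 \<union> R2) + card R3"
    by (rule card_Un_disjoint) (use fin_R d1 in auto)
  also have "card (R1 \<union> R2) = card R1 + card R2"
    by (rule card_Un_disjoint) (use fin_R d1 in auto)
  finally show ?thesis unfolding H_split using R1_card R2_card R3_card box_card by simp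
qed

lemma C_card: "card C = 3 * k * (k - 1)"
  using bij_betw_same_card[OF g_bij] H_card by simp

end



lemma modinj_int: "0 < (p::nat) \<Longrightarrow> j1 < p \<Longrightarrow> j2 < p \<Longrightarrow> int j1 mod int p = int j2 mod int p \<Longrightarrow> j1 = j2"
  by (simp add: mod_pos_pos_trivial)

lemma modinj: "j1 < p \<Longrightarrow> j2 < p \<Longrightarrow> ((a::nat) + j1) mod p = (a + j2) mod p \<Longrightarrow> j1 = j2"
proof -
  assume j: "j1 < p" "j2 < p" and e: "(a + j1) mod p = (a + j2) mod p"
  have "int ((a + j1) mod p) = int ((a + j2) mod p)" using e by simp
  then have "(int a + int j1) mod int p = (int a + int j2) mod int p" by (simp add: zmod_int)
  then have "int p dvd (int j1 - int j2)" by (simp add: mod_eq_dvd_iff)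
  then have "int j1 mod int p = int j2 mod int p" by (simp add: mod_eq_dvd_iff)
  then show ?thesis using j by (simp add: mod_pos_pos_trivial)
qed

lemma modinj_mult: "prime p \<Longrightarrow> \<not> p dvd k \<Longrightarrow> i1 < p \<Longrightarrow> i2 < p \<Longrightarrow> ((k::nat) * i1 + j) mod p = (k * i2 + j) mod p \<Longrightarrow> i1 = i2"
proof -
  assume pr: "prime p" and nk: "\<not> p dvd k" and i: "i1 < p" "i2 < p" and e: "(k * i1 + j) mod p = (k * i2 + j) mod p"
  have "int ((k * i1 + j) mod p) = int ((k * i2 + j) mod p)" using e by simp
  then have "(int k * int i1 + int j) mod int p = (int k * int i2 + int j) mod int p" by (simp add: zmod_int)
  then have "int p dvd int k * (int i1 - int i2)" by (simp add: mod_eq_dvd_iff algebra_simps)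
  moreover have "prime (int p)" using pr by simp
  moreover have "\<not> int p dvd int k" using nk by simp
  ultimately have "int p dvd (int i1 - int i2)" using prime_dvd_mult_iff by blast
  then have "int i1 mod int p = int i2 mod int p" by (simp add: mod_eq_dvd_iff)
  then show ?thesis using i by (simp add: mod_pos_pos_trivial)
qed




lemma mem_Bk: "(i,j,s) \<in> Bk p k \<longleftrightarrow> i < p \<and> j < p \<and> s = (k*i + j) mod p"
  unfolding Bk_def by auto
lemma Bk_alt: "Bk p k = {(i,j,s). i < p \<and> j < p \<and> s = (k*i + j) mod p}"
  by (auto simp: mem_Bk)

lemma Bk_latin: assumes pr: "prime p" and nk: "\<not> p dvd k" shows "latin_square p (Bk p k)"
proof -
  have p0: "0 < p" using pr prime_gt_0_nat by blast
  have r: "\<And>i j j'. j < p \<Longrightarrow> j' < p \<Longrightarrow> (k*i + j) mod p = (k*i + j') mod p \<Longrightarrow> j = j'"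
  proof -
    fix i j j' assume "j < p" "j' < p" "(k*i + j) mod p = (k*i + j') mod p"
    then show "j = j'" by (rule modinj)
  qed
  have c: "\<And>i i' j. i < p \<Longrightarrow> i' < p \<Longrightarrow> (k*i + j) mod p = (k*i' + j) mod p \<Longrightarrow> i = i'"
  proof -
    fix i i' j assume "i < p" "i' < p" "(k*i + j) mod p = (k*i' + j) mod p"
    then show "i = i'" by (rule modinj_mult[OF pr nk])
  qed
  have 1: "\<forall>(i,j,s)\<in>Bk p k. i < p \<and> j < p \<and> s < p" using p0 unfolding Bk_alt by auto
  have 2: "\<forall>i j s s'. (i, j, s) \<in> Bk p k \<longrightarrow> (i, j, s') \<in> Bk p k \<longrightarrow> s = s'" by (auto simp: mem_Bk)
  have 3: "\<forall>i j j' s. (i, j, s) \<in> Bk p k \<longrightarrow> (i, j', s) \<in> Bk p k \<longrightarrow> j = j'"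
  proof (intro allI impI)
    fix i j j' s assume "(i, j, s) \<in> Bk p k" "(i, j', s) \<in> Bk p k"
    then show "j = j'" using r[of j j' i] by (simp add: mem_Bk)
  qed
  have 4: "\<forall>i i' j s. (i, j, s) \<in> Bk p k \<longrightarrow> (i', j, s) \<in> Bk p k \<longrightarrow> i = i'"
  proof (intro allI impI)
    fix i i' j s assume "(i, j, s) \<in> Bk p k" "(i', j, s) \<in> Bk p k"
    then show "i = i'" using c[of i i' j] by (simp add: mem_Bk)
  qed
  have 5: "\<forall>i j. i < p \<longrightarrow> j < p \<longrightarrow> (\<exists>s. (i, j, s) \<in> Bk p k)" by (auto simp: mem_Bk)
  show ?thesis unfolding latin_square_def partial_latin_def by (intro conjI 1 2 3 4 5)
qed



lemma trade_from_square:
  fixes p k :: nat and f :: "nat \<Rightarrow> nat \<Rightarrow> nat" and C :: "(nat \<times> nat) set"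
  assumes pr: "prime p" and nk: "\<not> p dvd k"
    and flt: "\<And>i j. f i j < p"
    and frow: "\<And>i j1 j2. j1 < p \<Longrightarrow> j2 < p \<Longrightarrow> f i j1 = f i j2 \<Longrightarrow> j1 = j2"
    and fcol: "\<And>i1 i2 j. i1 < p \<Longrightarrow> i2 < p \<Longrightarrow> f i1 j = f i2 j \<Longrightarrow> i1 = i2"
    and fkl: "\<And>i1 i2 j1 j2. i1 < p \<Longrightarrow> i2 < p \<Longrightarrow> j1 < p \<Longrightarrow> j2 < p \<Longrightarrow>
       (k*i1 + j1) mod p = (k*i2 + j2) mod p \<Longrightarrow> f i1 j1 = f i2 j2 \<Longrightarrow> i1 = i2 \<and> j1 = j2"
    and Cdef: "C = {(i,j). i < p \<and> j < p \<and> f i j \<noteq> (i + j) mod p}"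
  shows "orthogonal_trade p 1 k {(i,j,s). (i,j) \<in> C \<and> s = (i + j) mod p}"
proof -
  define T where "T = {(i,j,s). (i,j) \<in> C \<and> s = (i + j) mod p}"
  define T' where "T' = {(i,j,s). (i,j) \<in> C \<and> s = f i j}"
  define N where "N = {(i,j,s). i < p \<and> j < p \<and> s = f i j}"
  have p0: "0 < p" using pr prime_gt_0_nat by blast
  have memC: "\<And>i j. (i,j) \<in> C \<longleftrightarrow> i < p \<and> j < p \<and> f i j \<noteq> (i + j) mod p" unfolding Cdef by simp
  have memT: "\<And>i j s. (i,j,s) \<in> T \<longleftrightarrow> (i,j) \<in> C \<and> s = (i + j) mod p" unfolding T_def by simp
  have memT': "\<And>i j s. (i,j,s) \<in> T' \<longleftrightarrow> (i,j) \<in> C \<and> s = f i j" unfolding T'_def by simp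
  have memN: "\<And>i j s. (i,j,s) \<in> N \<longleftrightarrow> i < p \<and> j < p \<and> s = f i j" unfolding N_def by simp
  have rowsurj: "\<And>i. f i ` {..<p} = {..<p}"
  proof -
    fix i
    show "f i ` {..<p} = {..<p}"
    proof (rule endo_inj_surj)
      show "f i ` {..<p} \<subseteq> {..<p}" using flt by auto
      show "inj_on (f i) {..<p}"
      proof (rule inj_onI)
        fix x y assume "x \<in> {..<p}" "y \<in> {..<p}" "f i x = f i y"
        then show "x = y" using frow[of x y i] by simp
      qed
    qed simp
  qed
  have colsurj: "\<And>j. (\<lambda>i. f i j) ` {..<p} = {..<p}"
  proof -
    fix j
    show "(\<lambda>i. f i j) ` {..<p} = {..<p}"
    proof (rule endo_inj_surj)
      show "(\<lambda>i. f i j) ` {..<p} \<subseteq> {..<p}" using flt by auto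
      show "inj_on (\<lambda>i. f i j) {..<p}"
      proof (rule inj_onI)
        fix x y assume "x \<in> {..<p}" "y \<in> {..<p}" "f x j = f y j"
        then show "x = y" using fcol[of x y j] by simp
      qed
    qed simp
  qed
  have linsurj: "\<And>a. (\<lambda>j. (a + j) mod p) ` {..<p} = {..<p}"
  proof -
    fix a
    show "(\<lambda>j. (a + j) mod p) ` {..<p} = {..<p}"
    proof (rule endo_inj_surj)
      show "(\<lambda>j. (a + j) mod p) ` {..<p} \<subseteq> {..<p}" using p0 by auto
      show "inj_on (\<lambda>j. (a + j) mod p) {..<p}"
      proof (rule inj_onI)
        fix x y assume "x \<in> {..<p}" "y \<in> {..<p}" "(a + x) mod p = (a + y) mod p"
        then show "x = y" using modinj[of x p y a] by simp
      qed
    qed simp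
  qed
  have linex: "\<And>a s. s < p \<Longrightarrow> \<exists>j<p. (a + j) mod p = s"
  proof -
    fix a s assume "s < p"
    then have "s \<in> (\<lambda>j. (a + j) mod p) ` {..<p}" using linsurj[of a] by simp
    then show "\<exists>j<p. (a + j) mod p = s" by auto
  qed
  have subT: "T \<subseteq> Bk p 1"
  proof
    fix x assume "x \<in> T"
    then obtain i j s where x: "x = (i,j,s)" "(i,j) \<in> C" "s = (i + j) mod p" unfolding T_def by auto
    then show "x \<in> Bk p 1" using memC[of i j] by (simp add: mem_Bk)
  qed
  have NE: "(Bk p 1 - T) \<union> T' = N"
  proof (rule Set.set_eqI)
    fix x :: "nat \<times> nat \<times> nat"
    obtain i j s where x: "x = (i,j,s)" by (cases x) auto
    show "x \<in> (Bk p 1 - T) \<union> T' \<longleftrightarrow> x \<in> N"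
      unfolding x memN memT memT' mem_Bk Un_iff Diff_iff memC by auto
  qed
  have plT': "partial_latin p T'"
  proof -
    have 1: "\<forall>(i,j,s)\<in>T'. i < p \<and> j < p \<and> s < p" unfolding T'_def using memC flt by auto
    have 2: "\<forall>i j s s'. (i, j, s) \<in> T' \<longrightarrow> (i, j, s') \<in> T' \<longrightarrow> s = s'" unfolding memT' by simp
    have 3: "\<forall>i j j' s. (i, j, s) \<in> T' \<longrightarrow> (i, j', s) \<in> T' \<longrightarrow> j = j'"
    proof (intro allI impI)
      fix i j j' s assume "(i, j, s) \<in> T'" "(i, j', s) \<in> T'"
      then show "j = j'" using frow[of j j' i] memC unfolding memT' by auto
    qed
    have 4: "\<forall>i i' j s. (i, j, s) \<in> T' \<longrightarrow> (i', j, s) \<in> T' \<longrightarrow> i = i'"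
    proof (intro allI impI)
      fix i i' j s assume "(i, j, s) \<in> T'" "(i', j, s) \<in> T'"
      then show "i = i'" using fcol[of i i' j] memC unfolding memT' by auto
    qed
    show ?thesis unfolding partial_latin_def by (intro conjI 1 2 3 4)
  qed
  have cellsT: "cells T = C" unfolding cells_def memT by auto
  have cellsT': "cells T' = C" unfolding cells_def memT' by auto
  have disj: "T \<inter> T' = {}"
  proof -
    have "\<And>i j s. (i,j,s) \<in> T \<Longrightarrow> (i,j,s) \<notin> T'" unfolding memT memT' memC by auto
    then show ?thesis by auto
  qed
  have rows: "\<And>i. row_syms T i = row_syms T' i"
  proof -
    fix i
    show "row_syms T i = row_syms T' i"
    proof
      show "row_syms T i \<subseteq> row_syms T' i"
      proof
        fix s assume "s \<in> row_syms T i"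
        then obtain j where j: "(i,j) \<in> C" "s = (i + j) mod p" unfolding row_syms_def memT by auto
        then have "s < p" using p0 by simp
        then have "s \<in> f i ` {..<p}" using rowsurj[of i] by simp
        then obtain j' where j': "j' < p" "f i j' = s" by auto
        have jC: "i < p" "j < p" "f i j \<noteq> (i + j) mod p" using j(1) memC by auto
        have "(i,j') \<in> C"
        proof (rule ccontr)
          assume "(i,j') \<notin> C"
          then have e: "f i j' = (i + j') mod p" using memC jC j' by auto
          then have "(i + j') mod p = (i + j) mod p" using j j' by simp
          then have "j' = j" using modinj[OF j'(1) jC(2)] by simp
          then show False using jC e by simp
        qed
        then show "s \<in> row_syms T' i" unfolding row_syms_def memT' using j' by auto
      qed
      show "row_syms T' i \<subseteq> row_syms T i"
      proof
        fix s assume "s \<in> row_syms T' i"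
        then obtain j where j: "(i,j) \<in> C" "s = f i j" unfolding row_syms_def memT' by auto
        have jC: "i < p" "j < p" "f i j \<noteq> (i + j) mod p" using j(1) memC by auto
        obtain j' where j': "j' < p" "(i + j') mod p = s" using linex[of s i] flt[of i j] j(2) by blast
        have "(i,j') \<in> C"
        proof (rule ccontr)
          assume "(i,j') \<notin> C"
          then have e: "f i j' = (i + j') mod p" using memC jC j' by auto
          then have "f i j' = f i j" using j j' by simp
          then have "j' = j" using frow[OF j'(1) jC(2)] by simp
          then show False using jC e by simp
        qed
        then show "s \<in> row_syms T i" unfolding row_syms_def memT using j' by auto
      qed
    qed
  qed
  have cols: "\<And>j. col_syms T j = col_syms T' j"
  proof -
    fix j
    show "col_syms T j = col_syms T' j"
    proof
      show "col_syms T j \<subseteq> col_syms T' j"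
      proof
        fix s assume "s \<in> col_syms T j"
        then obtain i where i: "(i,j) \<in> C" "s = (i + j) mod p" unfolding col_syms_def memT by auto
        then have "s < p" using p0 by simp
        then have "s \<in> (\<lambda>i. f i j) ` {..<p}" using colsurj[of j] by simp
        then obtain i' where i': "i' < p" "f i' j = s" by auto
        have iC: "i < p" "j < p" "f i j \<noteq> (i + j) mod p" using i(1) memC by auto
        have "(i',j) \<in> C"
        proof (rule ccontr)
          assume "(i',j) \<notin> C"
          then have e: "f i' j = (i' + j) mod p" using memC iC i' by auto
          then have "(j + i') mod p = (j + i) mod p" using i i' by (simp add: add.commute)
          then have "i' = i" using modinj[OF i'(1) iC(1)] by simp
          then show False using iC e by simp
        qed
        then show "s \<in> col_syms T' j" unfolding col_syms_def memT' using i' by auto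
      qed
      show "col_syms T' j \<subseteq> col_syms T j"
      proof
        fix s assume "s \<in> col_syms T' j"
        then obtain i where i: "(i,j) \<in> C" "s = f i j" unfolding col_syms_def memT' by auto
        have iC: "i < p" "j < p" "f i j \<noteq> (i + j) mod p" using i(1) memC by auto
        obtain i' where i': "i' < p" "(j + i') mod p = s" using linex[of s j] flt[of i j] i(2) by blast
        have "(i',j) \<in> C"
        proof (rule ccontr)
          assume "(i',j) \<notin> C"
          then have e: "f i' j = (i' + j) mod p" using memC iC i' by auto
          then have "f i' j = f i j" using i i' by (simp add: add.commute)
          then have "i' = i" using fcol[OF i'(1) iC(1)] by simp
          then show False using iC e by simp
        qed
        then show "s \<in> col_syms T j" unfolding col_syms_def memT using i' by (auto simp: add.commute)
      qed
    qed
  qed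
  have dm: "disjoint_mate p T T'"
    unfolding disjoint_mate_def using plT' cellsT cellsT' disj rows cols by auto
  have latN: "latin_square p N"
  proof -
    have 1: "\<forall>(i,j,s)\<in>N. i < p \<and> j < p \<and> s < p" unfolding N_def using flt by auto
    have 2: "\<forall>i j s s'. (i, j, s) \<in> N \<longrightarrow> (i, j, s') \<in> N \<longrightarrow> s = s'" unfolding memN by simp
    have 3: "\<forall>i j j' s. (i, j, s) \<in> N \<longrightarrow> (i, j', s) \<in> N \<longrightarrow> j = j'"
    proof (intro allI impI)
      fix i j j' s assume "(i, j, s) \<in> N" "(i, j', s) \<in> N"
      then show "j = j'" using frow[of j j' i] unfolding memN by auto
    qed
    have 4: "\<forall>i i' j s. (i, j, s) \<in> N \<longrightarrow> (i', j, s) \<in> N \<longrightarrow> i = i'"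
    proof (intro allI impI)
      fix i i' j s assume "(i, j, s) \<in> N" "(i', j, s) \<in> N"
      then show "i = i'" using fcol[of i i' j] unfolding memN by auto
    qed
    have 5: "\<forall>i j. i < p \<longrightarrow> j < p \<longrightarrow> (\<exists>s. (i, j, s) \<in> N)" unfolding memN by simp
    show ?thesis unfolding latin_square_def partial_latin_def by (intro conjI 1 2 3 4 5)
  qed
  have orth: "\<forall>a b. a < p \<longrightarrow> b < p \<longrightarrow> (\<exists>!c. \<exists>i j. c = (i, j) \<and> (i, j, a) \<in> N \<and> (i, j, b) \<in> Bk p k)"
  proof (intro allI impI)
    fix a b assume a: "a < p" and b: "b < p"
    define jb where "jb i = (SOME j. j < p \<and> (k*i + j) mod p = b)" for i
    have jb: "\<And>i. jb i < p \<and> (k*i + jb i) mod p = b"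
    proof -
      fix i
      have "\<exists>j. j < p \<and> (k*i + j) mod p = b" using linex[OF b, of "k*i"] by blast
      then show "jb i < p \<and> (k*i + jb i) mod p = b" unfolding jb_def by (rule someI_ex)
    qed
    have surj: "(\<lambda>i. f i (jb i)) ` {..<p} = {..<p}"
    proof (rule endo_inj_surj)
      show "(\<lambda>i. f i (jb i)) ` {..<p} \<subseteq> {..<p}" using flt by auto
      show "inj_on (\<lambda>i. f i (jb i)) {..<p}"
      proof (rule inj_onI)
        fix x y assume "x \<in> {..<p}" "y \<in> {..<p}" "f x (jb x) = f y (jb y)"
        then show "x = y" using fkl[of x y "jb x" "jb y"] jb[of x] jb[of y] by simp
      qed
    qed simp
    then have "a \<in> (\<lambda>i. f i (jb i)) ` {..<p}" using a by simp
    then obtain i where i: "i < p" "f i (jb i) = a" by auto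
    show "\<exists>!c. \<exists>i j. c = (i, j) \<and> (i, j, a) \<in> N \<and> (i, j, b) \<in> Bk p k"
    proof (rule ex1I[of _ "(i, jb i)"])
      show "\<exists>i' j. (i, jb i) = (i', j) \<and> (i', j, a) \<in> N \<and> (i', j, b) \<in> Bk p k"
        using i jb[of i] unfolding memN mem_Bk by auto
    next
      fix c assume "\<exists>i' j. c = (i', j) \<and> (i', j, a) \<in> N \<and> (i', j, b) \<in> Bk p k"
      then obtain i' j' where c: "c = (i', j')" "i' < p" "j' < p" "f i' j' = a" "(k*i' + j') mod p = b"
        unfolding memN mem_Bk by auto
      then have "i' = i \<and> j' = jb i" using fkl[of i' i j' "jb i"] i jb[of i] by simp
      then show "c = (i, jb i)" using c by simp
    qed
  qed
  have "orthogonal p N (Bk p k)"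
    unfolding orthogonal_def using latN Bk_latin[OF pr nk] orth by blast
  then show ?thesis
    unfolding orthogonal_trade_def T_def[symmetric] using subT dm NE by auto
qed

lemma card_trade: "card {(i,j,s). (i,j) \<in> C \<and> s = (i + j) mod (p::nat)} = card C"
proof -
  have "{(i,j,s). (i,j) \<in> C \<and> s = (i + j) mod p} = (\<lambda>(i,j). (i,j,(i+j) mod p)) ` C" by auto
  moreover have "inj_on (\<lambda>(i,j). (i,j,(i+j) mod p)) C" by (auto simp: inj_on_def)
  ultimately show ?thesis by (simp add: card_image)
qed




lemma six_root:
  fixes p :: nat
  assumes pr: "prime p" and p6: "p mod 6 = 1"
  shows "\<exists>a::int. int p dvd (a^2 - a + 1)"
proof -
  have p1: "1 < p" using pr prime_gt_1_nat by blast
  have "6 dvd p - 1" using p6 by presburger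
  then have "card {x\<in>totatives p. ord p x = 6} = totient 6"
    using prime_card_elements_with_ord_eq_totient[OF p1 pr, of 6] by simp
  then have "card {x\<in>totatives p. ord p x = 6} > 0" by simp
  then obtain a where a: "a \<in> totatives p" "ord p a = 6"
    by (metis (mono_tags, lifting) card_gt_0_iff mem_Collect_eq ex_in_conv)
  have c6: "[a ^ 6 = 1] (mod p)" using ord_works[of a p] a(2) by simp
  have n2: "\<not> [a ^ 2 = 1] (mod p)" using ord_minimal[of 2 p a] a(2) by simp
  have n3: "\<not> [a ^ 3 = 1] (mod p)" using ord_minimal[of 3 p a] a(2) by simp
  define A where "A = int a"
  have "[A ^ 6 = 1] (mod int p)" using c6 unfolding A_def by (metis cong_int_iff of_nat_1 of_nat_power)
  then have d6: "int p dvd (A^3 - 1) * (A^3 + 1)"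
    by (simp add: cong_iff_dvd_diff algebra_simps power_add[symmetric] power_mult[symmetric])
  have "\<not> [A ^ 3 = 1] (mod int p)" using n3 unfolding A_def by (metis cong_int_iff of_nat_1 of_nat_power)
  then have "\<not> int p dvd (A^3 - 1)" by (simp add: cong_iff_dvd_diff)
  then have "int p dvd (A^3 + 1)" using d6 pr prime_dvd_mult_iff by (metis prime_nat_int_transfer)
  moreover have "A^3 + 1 = (A + 1) * (A^2 - A + 1)" by (simp add: algebra_simps power2_eq_square power3_eq_cube)
  ultimately have d3: "int p dvd (A + 1) * (A^2 - A + 1)" by simp
  have "\<not> int p dvd (A + 1)"
  proof
    assume "int p dvd (A + 1)"
    then have "int p dvd (A + 1) * (A - 1)" by simp
    moreover have "(A + 1) * (A - 1) = A^2 - 1" by (simp add: algebra_simps power2_eq_square)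
    ultimately have "[A ^ 2 = 1] (mod int p)" by (simp add: cong_iff_dvd_diff)
    then have "[a ^ 2 = 1] (mod p)" unfolding A_def by (metis cong_int_iff of_nat_1 of_nat_power)
    then show False using n2 by simp
  qed
  then have "int p dvd (A^2 - A + 1)" using d3 pr prime_dvd_mult_iff by (metis prime_nat_int_transfer)
  then show ?thesis by blast
qed

lemma nat_poly: "int (k^2 - k + 1) = (int k)^2 - int k + 1"
proof -
  have "k \<le> k^2" by (simp add: power2_eq_square)
  then show ?thesis by (simp add: of_nat_diff)
qed

lemma k_exists:
  fixes p :: nat
  assumes pr: "prime p" and p6: "p mod 6 = 1"
  shows "\<exists>k::nat. 2 \<le> k \<and> k \<le> (p + 1) div 2 \<and> p dvd (k^2 - k + 1)"
proof -
  obtain A :: int where A: "int p dvd (A^2 - A + 1)" using six_root[OF pr p6] by blast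
  have p7: "p \<ge> 7"
  proof -
    have "p \<ge> 2" using pr prime_ge_2_nat by blast
    then show ?thesis using p6 by presburger
  qed
  define r where "r = A mod int p"
  define m where "m = A div int p"
  have r0: "0 \<le> r" "r < int p" unfolding r_def using p7 by simp_all
  have Arm: "A = r + int p * m" unfolding r_def m_def by simp
  have "A^2 - A + 1 = (r^2 - r + 1) + int p * (2*r*m + int p * m^2 - m)"
    unfolding Arm by (simp add: algebra_simps power2_eq_square)
  then have dr: "int p dvd (r^2 - r + 1)" using A by (metis dvd_add_left_iff dvd_triv_left)
  have r01: "r \<noteq> 0" "r \<noteq> 1"
  proof -
    show "r \<noteq> 0"
    proof
      assume "r = 0" then have "int p dvd 1" using dr by simp
      then show False using p7 by simp
    qed
    show "r \<noteq> 1"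
    proof
      assume "r = 1" then have "int p dvd 1" using dr by simp
      then show False using p7 by simp
    qed
  qed
  have podd: "p mod 2 = 1" using p6 by presburger
  show ?thesis
  proof (cases "r \<le> int ((p + 1) div 2)")
    case True
    define k where "k = nat r"
    have kr: "int k = r" unfolding k_def using r0 by simp
    have "int p dvd int (k^2 - k + 1)" unfolding nat_poly kr using dr .
    then have "p dvd (k^2 - k + 1)" by (simp only: int_dvd_int_iff)
    moreover have "2 \<le> k" "k \<le> (p + 1) div 2" using True r0 r01 kr by linarith+
    ultimately show ?thesis by blast
  next
    case False
    define k where "k = nat (int p + 1 - r)"
    have kr: "int k = int p + 1 - r" unfolding k_def using r0 by simp
    have e: "(int k)^2 - int k + 1 = (r^2 - r + 1) + int p * (int p + 1 - 2 * r)"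
      unfolding kr by (simp add: algebra_simps power2_eq_square)
    have "int p dvd (int k)^2 - int k + 1" unfolding e by (rule dvd_add[OF dr]) simp
    then have "int p dvd int (k^2 - k + 1)" unfolding nat_poly .
    then have "p dvd (k^2 - k + 1)" by (simp only: int_dvd_int_iff)
    moreover have "2 \<le> k" "k \<le> (p + 1) div 2" using False r0 r01 kr podd by linarith+
    ultimately show ?thesis by blast
  qed
qed


theorem mainTheorem11:
  fixes p :: nat
  assumes "prime p" and "p mod 6 = 1"
  shows "(\<exists>k T. 2 \<le> k \<and> k \<le> p - 1 \<and> orthogonal_trade p 1 k T \<and> \<not> p dvd card T)
       \<and> (\<exists>k::nat. 2 \<le> k \<and> k \<le> (p + 1) div 2 \<and> p dvd (k^2 - k + 1))
       \<and> (\<forall>k::nat. 2 \<le> k \<longrightarrow> k \<le> (p + 1) div 2 \<longrightarrow> p dvd (k^2 - k + 1) \<longrightarrow>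
            (\<exists>T. orthogonal_trade p 1 k T \<and> card T = 3 * k * (k - 1)))"
proof -
  have p7: "p \<ge> 7"
  proof -
    have "p \<ge> 2" using assms(1) prime_ge_2_nat by blast
    then show ?thesis using assms(2) by presburger
  qed
  have part3: "\<forall>k::nat. 2 \<le> k \<longrightarrow> k \<le> (p + 1) div 2 \<longrightarrow> p dvd (k^2 - k + 1) \<longrightarrow>
            (\<exists>T. orthogonal_trade p 1 k T \<and> card T = 3 * k * (k - 1))"
  proof (intro allI impI)
    fix k :: nat assume k: "2 \<le> k" "k \<le> (p + 1) div 2" "p dvd (k^2 - k + 1)"
    interpret tr p k by unfold_locales (use assms k in auto)
    have kp: "k < p" using k(2) p7 by linarith
    have nk: "\<not> p dvd k"
    proof
      assume "p dvd k" then have "p \<le> k" using k(1) by (simp add: dvd_imp_le)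
      then show False using kp by simp
    qed
    have ot: "orthogonal_trade p 1 k {(i,j,s). (i,j) \<in> tr.C p k \<and> s = (i + j) mod p}"
      by (rule trade_from_square[OF assms(1) nk f_lt f_row f_col f_kl C_def])
    have "card {(i,j,s). (i,j) \<in> tr.C p k \<and> s = (i + j) mod p} = 3 * k * (k - 1)"
      using card_trade[of "tr.C p k" p] C_card by simp
    then show "\<exists>T. orthogonal_trade p 1 k T \<and> card T = 3 * k * (k - 1)" using ot by blast
  qed
  obtain k where k: "2 \<le> k" "k \<le> (p + 1) div 2" "p dvd (k^2 - k + 1)" using k_exists[OF assms] by blast
  then obtain T where T: "orthogonal_trade p 1 k T" "card T = 3 * k * (k - 1)" using part3 by blast
  have kp: "k \<le> p - 1" using k(2) p7 by linarith
  have "\<not> p dvd card T"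
  proof
    assume "p dvd card T"
    then have "p dvd 3 * k * (k - 1)" using T(2) by simp
    then have "p dvd 3 \<or> p dvd k \<or> p dvd (k - 1)" using assms(1) prime_dvd_mult_iff by blast
    moreover have "\<not> p dvd 3" using p7 by (auto dest: dvd_imp_le)
    moreover have "\<not> p dvd k" using k(1) kp p7 by (auto dest: dvd_imp_le)
    moreover have "\<not> p dvd (k - 1)" using k(1) kp p7 by (auto dest: dvd_imp_le)
    ultimately show False by blast
  qed
  then show ?thesis using k kp T part3 by blast
qed

end
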